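(* Let $n\in\mathbb{N}$ with $n\geq 2$. Then (i) $|\mu_{n}(1212)|=\sum_{k=0}^{n-2}\left((2k+1)C_{k}C_{n-k-2}+C_{k}|\mu_{n-k-1}(1212)|\right)$; (ii) as formal power series, $\mu(1212,z)=\dfrac{z(C(z)-1)}{(1-2zC(z))(1-zC(z))}$; (iii) $|\mu_{n}(1212)|=\binom{2n-1}{n-2}$.
   Context: A matching of order $n$ is a partition of $[2n]$ into blocks (edges) of size two, identified with the word in $[n]^{2n}$ where both vertices of an edge carry the same letter and letters appear in increasing order of left vertices; $1212$ is the matching $\{\{1,3\},\{2,4\}\}$. A matching $\sigma$ of order $k$ is a pattern of $\tau$ if there are $i_1<\dots<i_{2k}$ with $\{i_p,i_q\}\in\tau$ iff $\{p,q\}\in\sigma$. The rightmost edge of a matching is the edge with the largest right vertex. A matching $\lambda$ minimally contains $\sigma$ if it contains $\sigma$ and deleting its rightmost edge yields a matching not containing $\sigma$; $\mu_n(\sigma)$ is the set of such matchings of order $n$ and $\mu(\sigma,z)=\sum_{n\ge0}|\mu_n(\sigma)|z^n$. $C_n=\frac{1}{n+1}\binom{2n}{n}$ is the $n$-th Catalan number and $C(z)=\sum_{n\ge0}C_nz^n$. *)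

theory Defs
  imports "HOL-Computational_Algebra.Formal_Power_Series"
begin

definition is_matching :: "nat \<Rightarrow> nat set set \<Rightarrow> bool" where
  "is_matching n \<tau> \<longleftrightarrow>
     (\<forall>e\<in>\<tau>. card e = 2) \<and> \<Union>\<tau> = {1..2*n} \<and>
     (\<forall>e\<in>\<tau>. \<forall>e'\<in>\<tau>. e \<noteq> e' \<longrightarrow> e \<inter> e' = {})"

definition contains_pattern :: "nat set set \<Rightarrow> nat set set \<Rightarrow> nat \<Rightarrow> bool" where
  "contains_pattern \<tau> \<sigma> k \<longleftrightarrow>
     (\<exists>i :: nat \<Rightarrow> nat. strict_mono_on {1..2*k} i \<and> i ` {1..2*k} \<subseteq> \<Union>\<tau> \<and>
        (\<forall>p\<in>{1..2*k}. \<forall>q\<in>{1..2*k}. {i p, i q} \<in> \<tau> \<longleftrightarrow> {p, q} \<in> \<sigma>))"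

definition rightmost_edge :: "nat set set \<Rightarrow> nat set" where
  "rightmost_edge \<tau> = (THE e. e \<in> \<tau> \<and> Max (\<Union>\<tau>) \<in> e)"

definition mu :: "nat \<Rightarrow> nat set set \<Rightarrow> nat \<Rightarrow> nat set set set" where
  "mu n \<sigma> k = {M. is_matching n M \<and> contains_pattern M \<sigma> k \<and>
                    \<not> contains_pattern (M - {rightmost_edge M}) \<sigma> k}"

definition m1212 :: "nat set set" where
  "m1212 = {{1,3},{2,4}}"

definition catalan :: "nat \<Rightarrow> rat" where
  "catalan n = of_nat ((2*n) choose n) / of_nat (n+1)"

definition catalan_fps :: "rat fps" where
  "catalan_fps = Abs_fps catalan"

definition mu_fps :: "nat set set \<Rightarrow> nat \<Rightarrow> rat fps" where
  "mu_fps \<sigma> k = Abs_fps (\<lambda>n. of_nat (card (mu n \<sigma> k)))"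

end

theory Submission
  imports Defs
begin


definition cb :: "nat \<Rightarrow> rat" where "cb n = of_nat ((2*n) choose n)"

lemma cb_fact: "cb k = fact (2*k) / (fact k * fact k)"
  unfolding cb_def using binomial_fact[of k "2*k"] by (simp add: mult_2)

lemma aux_cancel: "(p::rat) \<noteq> 0 \<Longrightarrow> F \<noteq> 0 \<Longrightarrow> p * ((2*p) * (s * G) / ((p*F)*(p*F))) = (2*s) * (G/(F*F))"
  by (simp add: field_simps)

lemma cb_rec: "(of_nat n + 1) * cb (Suc n) = (4 * of_nat n + 2) * cb n"
proof -
  have f1: "(fact (2*Suc n) :: rat) = (2 * of_nat n + 2) * ((2 * of_nat n + 1) * fact (2*n))"
    by (simp add: algebra_simps)
  have f2: "(fact (Suc n) :: rat) = (of_nat n + 1) * fact n" by (simp add: algebra_simps)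
  have p: "(of_nat n + 1 :: rat) \<noteq> 0" by (metis of_nat_Suc of_nat_eq_0_iff nat.distinct(1) add.commute)
  have q: "(fact n :: rat) \<noteq> 0" by simp
  have r: "(2 * of_nat n + 2 :: rat) = 2 * (of_nat n + 1)" "(4 * of_nat n + 2 :: rat) = 2 * (2 * of_nat n + 1)" by simp_all
  show ?thesis unfolding cb_fact f1 f2 r using aux_cancel[OF p q] by simp
qed

lemma cb_rec': "cb (Suc n) = (4 * of_nat n + 2) * cb n / (of_nat n + 1)"
proof -
  have "(of_nat n + 1 :: rat) \<noteq> 0" by (metis of_nat_Suc of_nat_eq_0_iff nat.distinct(1) add.commute)
  then show ?thesis using cb_rec[of n] by (simp add: field_simps)
qed

lemma cb0: "cb 0 = 1" by (simp add: cb_def)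

lemma catalan_cb: "catalan n = cb n / (of_nat n + 1)"
  by (simp add: catalan_def cb_def add.commute)

definition B :: "rat fps" where "B = Abs_fps cb"

lemma B_deriv: "(1 - 4*fps_X) * fps_deriv B = 2 * B"
proof (rule fps_ext)
  fix n
  have e: "(1 - 4*fps_X) * fps_deriv B = fps_deriv B - fps_const 4 * (fps_X * fps_deriv B)"
    by (simp add: algebra_simps numeral_fps_const)
  have e2: "2 * B = fps_const 2 * B" by (simp add: numeral_fps_const)
  show "fps_nth ((1 - 4*fps_X) * fps_deriv B) n = fps_nth (2 * B) n"
    unfolding e e2
  proof (cases n)
    case 0 then show "fps_nth (fps_deriv B - fps_const 4 * (fps_X * fps_deriv B)) n = fps_nth (fps_const 2 * B) n"
      using cb_rec[of 0] by (simp add: B_def)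
  next
    case (Suc m)
    show "fps_nth (fps_deriv B - fps_const 4 * (fps_X * fps_deriv B)) n = fps_nth (fps_const 2 * B) n"
      using cb_rec[of n] Suc by (simp add: B_def algebra_simps)
  qed
qed

lemma B_sq: "B^2 * (1 - 4*fps_X) = 1"
proof -
  have d: "fps_deriv (B^2 * (1 - 4*fps_X)) = 0"
  proof -
    have "fps_deriv (B^2 * (1 - 4*fps_X)) = 2 * B * ((1 - 4*fps_X) * fps_deriv B) - 4 * B^2"
      by (simp add: fps_deriv_power algebra_simps power2_eq_square)
    also have "\<dots> = 0" by (simp add: B_deriv power2_eq_square)
    finally show ?thesis .
  qed
  have "B^2 * (1 - 4*fps_X) = fps_const (fps_nth (B^2 * (1 - 4*fps_X)) 0)"
    by (rule fps_deriv_eq_0_iff[THEN iffD1, OF d])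
  also have "\<dots> = 1" by (simp add: B_def cb0 power2_eq_square)
  finally show ?thesis .
qed

lemma C_R: "2 * fps_X * catalan_fps = 1 - (1 - 4*fps_X) * B"
proof (rule fps_ext)
  fix n
  have e: "2 * fps_X * catalan_fps = fps_const 2 * (fps_X * catalan_fps)"
    by (simp add: numeral_fps_const)
  have e2: "1 - (1 - 4*fps_X) * B = 1 - B + fps_const 4 * (fps_X * B)"
    by (simp add: numeral_fps_const algebra_simps)
  show "fps_nth (2 * fps_X * catalan_fps) n = fps_nth (1 - (1 - 4*fps_X) * B) n"
    unfolding e e2
  proof (cases n)
    case 0 then show "fps_nth (fps_const 2 * (fps_X * catalan_fps)) n = fps_nth (1 - B + fps_const 4 * (fps_X * B)) n"
      by (simp add: B_def cb0)
  next
    case (Suc m)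
    have "(of_nat m + 1 :: rat) \<noteq> 0" by (metis of_nat_Suc of_nat_eq_0_iff nat.distinct(1) add.commute)
    then have "2 * catalan m = - cb (Suc m) + 4 * cb m"
      unfolding catalan_cb cb_rec' by (simp add: field_simps)
    then show "fps_nth (fps_const 2 * (fps_X * catalan_fps)) n = fps_nth (1 - B + fps_const 4 * (fps_X * B)) n"
      using Suc by (simp add: B_def catalan_fps_def)
  qed
qed

lemma C_eq: "fps_X * catalan_fps^2 = catalan_fps - 1"
proof -
  define C where "C = catalan_fps"
  define R where "R = (1 - 4*fps_X) * B"
  have "R^2 = (1 - 4*fps_X) * (B^2 * (1 - 4*fps_X))"
    by (simp add: R_def power2_eq_square ac_simps)
  also have "\<dots> = 1 - 4*fps_X" by (simp add: B_sq)
  finally have R2: "R^2 = 1 - 4*fps_X" .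
  have c: "2 * fps_X * C = 1 - R" using C_R unfolding C_def R_def .
  have Rc: "R = 1 - 2 * fps_X * C" using c by (simp add: algebra_simps)
  have "4 * fps_X^2 * C^2 = (2 * fps_X * C)^2" by (simp add: power2_eq_square algebra_simps)
  also have "\<dots> = (1 - R)^2" using c by simp
  also have "\<dots> = 1 - 2*R + R^2" by (simp add: power2_eq_square algebra_simps)
  also have "\<dots> = 2 * (1 - R) - 4 * fps_X" using R2 by (simp add: algebra_simps)
  also have "\<dots> = 4 * fps_X * C - 4 * fps_X" by (simp add: Rc algebra_simps)
  finally have "4 * fps_X * (fps_X * C^2 - C + 1) = 0" by (simp add: power2_eq_square algebra_simps)
  then have "fps_X * C^2 - C + 1 = 0" by simp
  then show ?thesis unfolding C_def by (simp add: algebra_simps)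
qed

lemma catalan_conv: "(\<Sum>k=0..m. catalan k * catalan (m-k)) = catalan (Suc m)"
proof -
  have "fps_nth (fps_X * catalan_fps^2) (Suc m) = fps_nth (catalan_fps - 1) (Suc m)" using C_eq by simp
  moreover have "fps_nth (fps_X * catalan_fps^2) (Suc m) = fps_nth (catalan_fps * catalan_fps) m"
    by (simp add: power2_eq_square)
  moreover have "fps_nth (catalan_fps * catalan_fps) m = (\<Sum>k=0..m. catalan k * catalan (m-k))"
    by (simp add: fps_mult_nth catalan_fps_def)
  moreover have "fps_nth (catalan_fps - 1) (Suc m) = catalan (Suc m)"
    by (simp add: catalan_fps_def)
  ultimately show ?thesis by simp
qed



definition cf :: "nat \<Rightarrow> rat" where "cf L = (if even L then catalan (L div 2) else 0)"

lemma sum_split_odd: "(\<Sum>j<Suc (2*m). h j) = (\<Sum>k\<le>m. h (2*k)) + (\<Sum>k<m. h (2*k+1))"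
proof (induction m)
  case 0 then show ?case by simp
next
  case (Suc m)
  have "(\<Sum>j<Suc (2*Suc m). h j) = (\<Sum>j<Suc (2*m). h j) + h (2*m+1) + h (2*m+2)"
    by (simp add: add.assoc)
  then show ?case using Suc by (simp add: algebra_simps)
qed

lemma sum_split_even: "(\<Sum>j<2*(m::nat). h j) = (\<Sum>k<m. h (2*k)) + (\<Sum>k<m. h (2*k+1))"
proof (induction m)
  case 0 then show ?case by simp
next
  case (Suc m)
  have "(\<Sum>j<2*Suc m. h j) = (\<Sum>j<2*m. h j) + h (2*m) + h (2*m+1)"
    by (simp add: add.assoc)
  then show ?case using Suc by (simp add: algebra_simps)
qed

lemma cf_rec: "cf (Suc L) = (\<Sum>j<L. cf j * cf (L - 1 - j))"
proof (cases L)
  case 0 then show ?thesis by (simp add: cf_def)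
next
  case (Suc L')
  show ?thesis
  proof (cases "even L'")
    case True
    then obtain m where m: "L' = 2*m" by (auto elim: evenE)
    have "(\<Sum>j<L. cf j * cf (L - 1 - j)) = (\<Sum>j<Suc (2*m). cf j * cf (2*m - j))"
      using Suc m by simp
    also have "\<dots> = (\<Sum>k\<le>m. cf (2*k) * cf (2*m - 2*k)) + (\<Sum>k<m. cf (2*k+1) * cf (2*m - (2*k+1)))"
      by (rule sum_split_odd)
    also have "(\<Sum>k<m. cf (2*k+1) * cf (2*m - (2*k+1))) = 0"
      by (simp add: cf_def)
    also have "(\<Sum>k\<le>m. cf (2*k) * cf (2*m - 2*k)) = (\<Sum>k=0..m. catalan k * catalan (m - k))"
    proof -
      have "\<And>k. cf (2*k) * cf (2*m - 2*k) = catalan k * catalan (m - k)"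
        by (simp add: cf_def flip: diff_mult_distrib2)
      then show ?thesis by (simp add: atMost_atLeast0)
    qed
    also have "\<dots> = catalan (Suc m)" by (rule catalan_conv)
    finally show ?thesis using Suc m by (simp add: cf_def)
  next
    case False
    then obtain m where m: "L' = 2*m+1" by (auto elim: oddE)
    have "(\<Sum>j<L. cf j * cf (L - 1 - j)) = (\<Sum>j<2*Suc m. cf j * cf (2*m + 1 - j))"
      using Suc m by simp
    also have "\<dots> = (\<Sum>k<Suc m. cf (2*k) * cf (2*m + 1 - 2*k)) + (\<Sum>k<Suc m. cf (2*k+1) * cf (2*m + 1 - (2*k+1)))"
      by (rule sum_split_even)
    also have "\<dots> = 0"
    proof -
      have "\<And>k. k < Suc m \<Longrightarrow> odd (2*m + 1 - 2*k)" by presburger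
      then have "\<And>k. k < Suc m \<Longrightarrow> cf (2*m + 1 - 2*k) = 0" by (simp add: cf_def)
      then show ?thesis by (simp add: cf_def)
    qed
    finally show ?thesis using Suc m by (simp add: cf_def)
  qed
qed



definition pmatch :: "nat set set \<Rightarrow> bool" where
  "pmatch M \<longleftrightarrow> (\<forall>e\<in>M. card e = 2) \<and> (\<forall>e\<in>M. \<forall>e'\<in>M. e \<noteq> e' \<longrightarrow> e \<inter> e' = {})"

definition pm :: "nat set \<Rightarrow> nat set set set" where
  "pm S = {M. pmatch M \<and> \<Union>M = S}"

definition crossing :: "nat set set \<Rightarrow> bool" where
  "crossing M \<longleftrightarrow> (\<exists>a b c d. a < b \<and> b < c \<and> c < d \<and> {a,c} \<in> M \<and> {b,d} \<in> M)"

definition ncm :: "nat set \<Rightarrow> nat set set set" where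
  "ncm S = {M \<in> pm S. \<not> crossing M}"

lemma card2E:
  assumes "card (e::nat set) = 2"
  obtains p r where "p < r" "e = {p, r}"
proof -
  obtain x y where "e = {x,y}" "x \<noteq> y" using assms by (meson card_2_iff)
  show ?thesis
  proof (cases "x < y")
    case True then show ?thesis using that \<open>e = {x,y}\<close> by blast
  next
    case False
    then have "y < x" using \<open>x \<noteq> y\<close> by simp
    moreover have "e = {y,x}" using \<open>e = {x,y}\<close> by blast
    ultimately show ?thesis using that by blast
  qed
qed

lemma pmatch_subset: "pmatch M \<Longrightarrow> N \<subseteq> M \<Longrightarrow> pmatch N"
  unfolding pmatch_def by blast

lemma crossing_mono: "crossing N \<Longrightarrow> N \<subseteq> M \<Longrightarrow> crossing M"
  unfolding crossing_def by blast

lemma pm_finite: "finite S \<Longrightarrow> finite (pm S)"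
proof -
  assume "finite S"
  have "pm S \<subseteq> Pow (Pow S)" unfolding pm_def by auto
  then show ?thesis using \<open>finite S\<close> finite_subset by blast
qed

lemma ncm_finite: "finite S \<Longrightarrow> finite (ncm S)"
  unfolding ncm_def using pm_finite by auto

lemma pm_remove:
  assumes "M \<in> pm S" "e \<in> M"
  shows "M - {e} \<in> pm (S - e)"
proof -
  have pmM: "pmatch M" and U: "\<Union>M = S" using assms unfolding pm_def by auto
  have "\<Union>(M - {e}) = S - e"
  proof
    show "\<Union>(M - {e}) \<subseteq> S - e" using pmM U assms(2) unfolding pmatch_def by blast
    show "S - e \<subseteq> \<Union>(M - {e})" using U by blast
  qed
  then show ?thesis using pmatch_subset[OF pmM] unfolding pm_def by auto
qed

lemma pm_insert:
  assumes "N \<in> pm T" "card e = 2" "e \<inter> T = {}"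
  shows "insert e N \<in> pm (e \<union> T)"
proof -
  have pmN: "pmatch N" and U: "\<Union>N = T" using assms unfolding pm_def by auto
  have "\<forall>f\<in>N. e \<inter> f = {}" using U assms(3) by blast
  then have "pmatch (insert e N)" using pmN assms(2) unfolding pmatch_def by blast
  then show ?thesis using U unfolding pm_def by auto
qed

lemma pm_empty: "pm {} = {{}}"
proof -
  have "M = {}" if "M \<in> pm {}" for M
  proof -
    have "\<forall>e\<in>M. e = {}" using that unfolding pm_def by auto
    moreover have "\<forall>e\<in>M. card e = 2" using that unfolding pm_def pmatch_def by auto
    ultimately show ?thesis by fastforce
  qed
  moreover have "{} \<in> pm {}" unfolding pm_def pmatch_def by auto
  ultimately show ?thesis by blast
qed

lemma ncm_empty: "ncm {} = {{}}"
  unfolding ncm_def pm_empty crossing_def by auto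

lemma edge_unique:
  assumes "pmatch M" "e \<in> M" "f \<in> M" "x \<in> e" "x \<in> f"
  shows "e = f"
  using assms unfolding pmatch_def by blast



lemma pmD: "pmatch M \<Longrightarrow> e\<in>M \<Longrightarrow> e'\<in>M \<Longrightarrow> e\<noteq>e' \<Longrightarrow> e \<inter> e' = {}"
  unfolding pmatch_def by blast
lemma pmC: "pmatch M \<Longrightarrow> e\<in>M \<Longrightarrow> card e = 2"
  unfolding pmatch_def by blast

definition sinn :: "nat set \<Rightarrow> nat \<Rightarrow> nat \<Rightarrow> nat set" where
  "sinn S a b = {x\<in>S. a < x \<and> x < b}"
definition sout :: "nat set \<Rightarrow> nat \<Rightarrow> nat set" where
  "sout S b = {x\<in>S. b < x}"

lemma pair_lt_eq: "{p,r} = {a,b} \<Longrightarrow> p < r \<Longrightarrow> (a::nat) < b \<Longrightarrow> p = a \<and> r = b"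
  by (auto simp: doubleton_eq_iff)

lemma edge_split:
  assumes M: "M \<in> ncm S" and ab: "{a,b} \<in> M" and amin: "\<forall>x\<in>S. a \<le> x" and ne: "a \<noteq> b"
    and e: "e \<in> M" "e \<noteq> {a,b}"
  shows "e \<subseteq> sinn S a b \<or> e \<subseteq> sout S b"
proof -
  have pmM: "pmatch M" and U: "\<Union>M = S" and nc: "\<not> crossing M" using M unfolding ncm_def pm_def by auto
  obtain p r where pr: "p < r" "e = {p,r}" by (rule card2E[OF pmC[OF pmM e(1)]])
  have dis: "e \<inter> {a,b} = {}" using pmD[OF pmM e(1) ab e(2)] .
  have nab: "p \<noteq> a" "r \<noteq> a" "p \<noteq> b" "r \<noteq> b" using dis pr by auto
  have S: "p \<in> S" "r \<in> S" "b \<in> S" using U pr e(1) ab by auto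
  have "a \<le> p" "a \<le> r" "a \<le> b" using amin S by auto
  then have ap: "a < p" "a < r" "a < b" using ne nab by auto
  show ?thesis
  proof (cases "r < b")
    case True then show ?thesis using pr S ap unfolding sinn_def by auto
  next
    case False
    show ?thesis
    proof (cases "b < p")
      case True then show ?thesis using pr S unfolding sout_def by auto
    next
      case False
      then have "a < p" "p < b" "b < r" using ap nab \<open>\<not> r < b\<close> by auto
      then have "crossing M" unfolding crossing_def using ab e(1) pr(2) by blast
      then show ?thesis using nc by blast
    qed
  qed
qed

lemma split_decomp:
  assumes M: "M \<in> ncm S" and ab: "{a,b} \<in> M" and amin: "\<forall>x\<in>S. a \<le> x" and ne: "a \<noteq> b"
  shows "M = insert {a,b} ({e\<in>M. e \<subseteq> sinn S a b} \<union> {e\<in>M. e \<subseteq> sout S b})"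
    and "{e\<in>M. e \<subseteq> sinn S a b} \<in> ncm (sinn S a b)"
    and "{e\<in>M. e \<subseteq> sout S b} \<in> ncm (sout S b)"
proof -
  have pmM: "pmatch M" and U: "\<Union>M = S" and nc: "\<not> crossing M" using M unfolding ncm_def pm_def by auto
  have es: "\<And>e. e \<in> M \<Longrightarrow> e \<noteq> {a,b} \<Longrightarrow> e \<subseteq> sinn S a b \<or> e \<subseteq> sout S b"
    using edge_split[OF M ab amin ne] by blast
  show "M = insert {a,b} ({e\<in>M. e \<subseteq> sinn S a b} \<union> {e\<in>M. e \<subseteq> sout S b})"
  proof
    show "M \<subseteq> insert {a,b} ({e\<in>M. e \<subseteq> sinn S a b} \<union> {e\<in>M. e \<subseteq> sout S b})"
      using es by blast
  qed (use ab in blast)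
  have "a \<in> S" "b \<in> S" using U ab by auto
  then have "a < b" using amin ne by force
  have U1: "\<Union>{e\<in>M. e \<subseteq> sinn S a b} = sinn S a b"
  proof
    show "sinn S a b \<subseteq> \<Union>{e\<in>M. e \<subseteq> sinn S a b}"
    proof
      fix x assume x: "x \<in> sinn S a b"
      then obtain e where e: "e \<in> M" "x \<in> e" using U unfolding sinn_def by blast
      have "e \<noteq> {a,b}" using x e unfolding sinn_def by auto
      then have "e \<subseteq> sinn S a b \<or> e \<subseteq> sout S b" using es e by blast
      moreover have "\<not> e \<subseteq> sout S b" using x e unfolding sinn_def sout_def by auto
      ultimately show "x \<in> \<Union>{e\<in>M. e \<subseteq> sinn S a b}" using e by blast
    qed
  qed blast
  have U2: "\<Union>{e\<in>M. e \<subseteq> sout S b} = sout S b"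
  proof
    show "sout S b \<subseteq> \<Union>{e\<in>M. e \<subseteq> sout S b}"
    proof
      fix x assume x: "x \<in> sout S b"
      then obtain e where e: "e \<in> M" "x \<in> e" using U unfolding sout_def by blast
      have "x \<noteq> a" "x \<noteq> b" using x \<open>a < b\<close> unfolding sout_def by auto
      then have "e \<noteq> {a,b}" using e by auto
      then have "e \<subseteq> sinn S a b \<or> e \<subseteq> sout S b" using es e by blast
      moreover have "\<not> e \<subseteq> sinn S a b" using x e unfolding sinn_def sout_def by auto
      ultimately show "x \<in> \<Union>{e\<in>M. e \<subseteq> sout S b}" using e by blast
    qed
  qed blast
  have sub1: "{e\<in>M. e \<subseteq> sinn S a b} \<subseteq> M" and sub2: "{e\<in>M. e \<subseteq> sout S b} \<subseteq> M" by auto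
  show "{e\<in>M. e \<subseteq> sinn S a b} \<in> ncm (sinn S a b)"
    unfolding ncm_def pm_def using U1 pmatch_subset[OF pmM sub1] nc crossing_mono[OF _ sub1] by auto
  show "{e\<in>M. e \<subseteq> sout S b} \<in> ncm (sout S b)"
    unfolding ncm_def pm_def using U2 pmatch_subset[OF pmM sub2] nc crossing_mono[OF _ sub2] by auto
qed



lemma edges_nonempty: "pmatch M \<Longrightarrow> e \<in> M \<Longrightarrow> e \<noteq> {}"
  using pmC by fastforce

lemma split_build:
  assumes M1: "M1 \<in> ncm (sinn S a b)" and M2: "M2 \<in> ncm (sout S b)"
    and amin: "\<forall>x\<in>S. a \<le> x" and ne: "a \<noteq> b" and aS: "a \<in> S" and bS: "b \<in> S"
  shows "insert {a,b} (M1 \<union> M2) \<in> ncm S"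
    and "{e \<in> insert {a,b} (M1 \<union> M2). e \<subseteq> sinn S a b} = M1"
    and "{e \<in> insert {a,b} (M1 \<union> M2). e \<subseteq> sout S b} = M2"
proof -
  have "a \<le> b" using amin bS by blast
  then have "a < b" using ne by simp
  have p1: "pmatch M1" and U1: "\<Union>M1 = sinn S a b" and nc1: "\<not> crossing M1" using M1 unfolding ncm_def pm_def by auto
  have p2: "pmatch M2" and U2: "\<Union>M2 = sout S b" and nc2: "\<not> crossing M2" using M2 unfolding ncm_def pm_def by auto
  have X1: "\<And>e. e \<in> M1 \<Longrightarrow> e \<subseteq> sinn S a b" using U1 by blast
  have X2: "\<And>e. e \<in> M2 \<Longrightarrow> e \<subseteq> sout S b" using U2 by blast
  have ne1: "\<And>e. e \<in> M1 \<Longrightarrow> e \<noteq> {}" using edges_nonempty[OF p1] by blast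
  have ne2: "\<And>e. e \<in> M2 \<Longrightarrow> e \<noteq> {}" using edges_nonempty[OF p2] by blast
  have dis12: "sinn S a b \<inter> sout S b = {}" unfolding sinn_def sout_def by auto
  have abn: "\<not> {a,b} \<subseteq> sinn S a b" "\<not> {a,b} \<subseteq> sout S b" unfolding sinn_def sout_def by auto
  have n2: "\<And>e. e \<in> M2 \<Longrightarrow> \<not> e \<subseteq> sinn S a b"
  proof -
    fix e assume "e \<in> M2"
    then have "e \<subseteq> sout S b" "e \<noteq> {}" using X2 ne2 by auto
    then show "\<not> e \<subseteq> sinn S a b" using dis12 by blast
  qed
  have n1: "\<And>e. e \<in> M1 \<Longrightarrow> \<not> e \<subseteq> sout S b"
  proof -
    fix e assume "e \<in> M1"
    then have "e \<subseteq> sinn S a b" "e \<noteq> {}" using X1 ne1 by auto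
    then show "\<not> e \<subseteq> sout S b" using dis12 by blast
  qed
  show "{e \<in> insert {a,b} (M1 \<union> M2). e \<subseteq> sinn S a b} = M1"
    using X1 n2 abn(1) by auto
  show "{e \<in> insert {a,b} (M1 \<union> M2). e \<subseteq> sout S b} = M2"
    using X2 n1 abn(2) by auto
  have pmU: "pmatch (M1 \<union> M2)"
    unfolding pmatch_def
  proof (intro conjI ballI impI)
    fix e assume "e \<in> M1 \<union> M2" then show "card e = 2" using pmC[OF p1] pmC[OF p2] by blast
  next
    fix e e' assume h: "e \<in> M1 \<union> M2" "e' \<in> M1 \<union> M2" "e \<noteq> e'"
    show "e \<inter> e' = {}"
    proof (cases "e \<in> M1")
      case True
      show ?thesis
      proof (cases "e' \<in> M1")
        case True then show ?thesis using pmD[OF p1] \<open>e \<in> M1\<close> h(3) by blast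
      next
        case False then have "e' \<in> M2" using h by blast
        then show ?thesis using X1[OF \<open>e \<in> M1\<close>] X2 dis12 by blast
      qed
    next
      case False then have "e \<in> M2" using h by blast
      show ?thesis
      proof (cases "e' \<in> M1")
        case True then show ?thesis using X1 X2[OF \<open>e \<in> M2\<close>] dis12 by blast
      next
        case False then have "e' \<in> M2" using h by blast
        then show ?thesis using pmD[OF p2] \<open>e \<in> M2\<close> h(3) by blast
      qed
    qed
  qed
  have UU: "\<Union>(M1 \<union> M2) = sinn S a b \<union> sout S b" using U1 U2 by blast
  have c2: "card {a,b} = 2" using ne by simp
  have d2: "{a,b} \<inter> (sinn S a b \<union> sout S b) = {}" using \<open>a < b\<close> unfolding sinn_def sout_def by auto
  have ins: "insert {a,b} (M1 \<union> M2) \<in> pm ({a,b} \<union> (sinn S a b \<union> sout S b))"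
    by (rule pm_insert[OF _ c2 d2]) (use pmU UU in \<open>simp add: pm_def\<close>)
  have SS: "{a,b} \<union> (sinn S a b \<union> sout S b) = S"
  proof
    show "S \<subseteq> {a,b} \<union> (sinn S a b \<union> sout S b)"
    proof
      fix x assume x: "x \<in> S"
      show "x \<in> {a,b} \<union> (sinn S a b \<union> sout S b)"
      proof (cases "x = a \<or> x = b")
        case True then show ?thesis by blast
      next
        case False
        have "a \<le> x" using amin x by blast
        then have "a < x" using False by auto
        show ?thesis
        proof (cases "x < b")
          case True then have "x \<in> sinn S a b" using x \<open>a < x\<close> by (simp add: sinn_def)
          then show ?thesis by blast
        next
          case False2: False
          then have "b < x" using False by auto
          then have "x \<in> sout S b" using x by (simp add: sout_def)
          then show ?thesis by blast
        qed
      qed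
    qed
    show "{a,b} \<union> (sinn S a b \<union> sout S b) \<subseteq> S" using aS bS unfolding sinn_def sout_def by blast
  qed
  have cls: "\<And>p r. {p,r} \<in> insert {a,b} (M1 \<union> M2) \<Longrightarrow> p < r \<Longrightarrow>
      (p = a \<and> r = b) \<or> (a < p \<and> r < b \<and> {p,r} \<in> M1) \<or> (b < p \<and> b < r \<and> {p,r} \<in> M2)"
  proof -
    fix p r assume h: "{p,r} \<in> insert {a,b} (M1 \<union> M2)" "p < r"
    show "(p = a \<and> r = b) \<or> (a < p \<and> r < b \<and> {p,r} \<in> M1) \<or> (b < p \<and> b < r \<and> {p,r} \<in> M2)"
    proof (cases "{p,r} = {a,b}")
      case True then show ?thesis using pair_lt_eq[OF True h(2) \<open>a < b\<close>] by simp
    next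
      case False
      then have "{p,r} \<in> M1 \<or> {p,r} \<in> M2" using h by blast
      then show ?thesis
      proof
        assume "{p,r} \<in> M1" then show ?thesis using X1[of "{p,r}"] h(2) unfolding sinn_def by auto
      next
        assume "{p,r} \<in> M2" then show ?thesis using X2[of "{p,r}"] unfolding sout_def by auto
      qed
    qed
  qed
  have "\<not> crossing (insert {a,b} (M1 \<union> M2))"
  proof
    assume "crossing (insert {a,b} (M1 \<union> M2))"
    then obtain p q r s where pq: "p < q" "q < r" "r < s" and
      e1: "{p,r} \<in> insert {a,b} (M1 \<union> M2)" and e2: "{q,s} \<in> insert {a,b} (M1 \<union> M2)"
      unfolding crossing_def by blast
    have c1: "(p = a \<and> r = b) \<or> (a < p \<and> r < b \<and> {p,r} \<in> M1) \<or> (b < p \<and> b < r \<and> {p,r} \<in> M2)"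
      using cls[OF e1] pq by simp
    have c2: "(q = a \<and> s = b) \<or> (a < q \<and> s < b \<and> {q,s} \<in> M1) \<or> (b < q \<and> b < s \<and> {q,s} \<in> M2)"
      using cls[OF e2] pq by simp
    have cr1: "\<not> ({p,r} \<in> M1 \<and> {q,s} \<in> M1)" using nc1 pq unfolding crossing_def by blast
    have cr2: "\<not> ({p,r} \<in> M2 \<and> {q,s} \<in> M2)" using nc2 pq unfolding crossing_def by blast
    from c1 c2 cr1 cr2 pq \<open>a < b\<close> show False by linarith
  qed
  then show "insert {a,b} (M1 \<union> M2) \<in> ncm S" using ins SS unfolding ncm_def by auto
qed



lemma S_decomp:
  assumes fin: "finite S" and amin: "\<forall>x\<in>S. a \<le> x" and ne: "a \<noteq> b" and aS: "a \<in> S" and bS: "b \<in> S"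
  shows "card S = 2 + card (sinn S a b) + card (sout S b)"
proof -
  have "a \<le> b" using amin bS by blast
  then have "a < b" using ne by simp
  have SS: "S = {a,b} \<union> (sinn S a b \<union> sout S b)"
  proof
    show "S \<subseteq> {a,b} \<union> (sinn S a b \<union> sout S b)"
    proof
      fix x assume x: "x \<in> S"
      show "x \<in> {a,b} \<union> (sinn S a b \<union> sout S b)"
      proof (cases "x = a \<or> x = b")
        case True then show ?thesis by blast
      next
        case False
        have "a \<le> x" using amin x by blast
        then have "a < x" using False by auto
        show ?thesis
        proof (cases "x < b")
          case True then have "x \<in> sinn S a b" using x \<open>a < x\<close> by (simp add: sinn_def)
          then show ?thesis by blast
        next
          case False2: False
          then have "b < x" using False by auto
          then have "x \<in> sout S b" using x by (simp add: sout_def)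
          then show ?thesis by blast
        qed
      qed
    qed
    show "{a,b} \<union> (sinn S a b \<union> sout S b) \<subseteq> S" using aS bS unfolding sinn_def sout_def by blast
  qed
  have f1: "finite (sinn S a b)" "finite (sout S b)" using fin unfolding sinn_def sout_def by auto
  have d1: "sinn S a b \<inter> sout S b = {}" unfolding sinn_def sout_def by auto
  have d2: "{a,b} \<inter> (sinn S a b \<union> sout S b) = {}" using \<open>a < b\<close> unfolding sinn_def sout_def by auto
  have "card S = card {a,b} + card (sinn S a b \<union> sout S b)"
    by (subst SS, rule card_Un_disjoint) (use f1 d2 in auto)
  also have "card (sinn S a b \<union> sout S b) = card (sinn S a b) + card (sout S b)"
    by (rule card_Un_disjoint) (use f1 d1 in auto)
  finally show ?thesis using ne by simp
qed

lemma P_card: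
  assumes fin: "finite S" and amin: "\<forall>x\<in>S. a \<le> x" and ne: "a \<noteq> b" and aS: "a \<in> S" and bS: "b \<in> S"
  shows "card {M\<in>ncm S. {a,b}\<in>M} = card (ncm (sinn S a b)) * card (ncm (sout S b))"
proof -
  define g where "g = (\<lambda>(M1, M2). insert {a,b} (M1 \<union> M2))"
  have eq: "{M\<in>ncm S. {a,b}\<in>M} = g ` (ncm (sinn S a b) \<times> ncm (sout S b))"
  proof
    show "{M\<in>ncm S. {a,b}\<in>M} \<subseteq> g ` (ncm (sinn S a b) \<times> ncm (sout S b))"
    proof
      fix M assume "M \<in> {M\<in>ncm S. {a,b}\<in>M}"
      then have M: "M \<in> ncm S" "{a,b} \<in> M" by auto
      note sd = split_decomp[OF M amin ne]
      have "M = g ({e\<in>M. e \<subseteq> sinn S a b}, {e\<in>M. e \<subseteq> sout S b})"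
        unfolding g_def using sd(1) by simp
      then show "M \<in> g ` (ncm (sinn S a b) \<times> ncm (sout S b))"
        using sd(2,3) by blast
    qed
    show "g ` (ncm (sinn S a b) \<times> ncm (sout S b)) \<subseteq> {M\<in>ncm S. {a,b}\<in>M}"
    proof
      fix M assume "M \<in> g ` (ncm (sinn S a b) \<times> ncm (sout S b))"
      then obtain M1 M2 where m: "M1 \<in> ncm (sinn S a b)" "M2 \<in> ncm (sout S b)" "M = g (M1, M2)" by blast
      have "M \<in> ncm S" using split_build(1)[OF m(1,2) amin ne aS bS] m(3) unfolding g_def by simp
      moreover have "{a,b} \<in> M" using m(3) unfolding g_def by simp
      ultimately show "M \<in> {M\<in>ncm S. {a,b}\<in>M}" by blast
    qed
  qed
  have inj: "inj_on g (ncm (sinn S a b) \<times> ncm (sout S b))"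
  proof (rule inj_onI)
    fix x y assume x: "x \<in> ncm (sinn S a b) \<times> ncm (sout S b)" and y: "y \<in> ncm (sinn S a b) \<times> ncm (sout S b)"
      and gxy: "g x = g y"
    obtain M1 M2 where xx: "x = (M1, M2)" "M1 \<in> ncm (sinn S a b)" "M2 \<in> ncm (sout S b)" using x by blast
    obtain N1 N2 where yy: "y = (N1, N2)" "N1 \<in> ncm (sinn S a b)" "N2 \<in> ncm (sout S b)" using y by blast
    note b1 = split_build[OF xx(2,3) amin ne aS bS]
    note b2 = split_build[OF yy(2,3) amin ne aS bS]
    have G: "insert {a,b} (M1 \<union> M2) = insert {a,b} (N1 \<union> N2)" using gxy xx yy unfolding g_def by simp
    have "M1 = N1" using b1(2) b2(2) G by simp
    moreover have "M2 = N2" using b1(3) b2(3) G by simp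
    ultimately show "x = y" using xx yy by simp
  qed
  have "card {M\<in>ncm S. {a,b}\<in>M} = card (ncm (sinn S a b) \<times> ncm (sout S b))"
    unfolding eq by (rule card_image[OF inj])
  also have "\<dots> = card (ncm (sinn S a b)) * card (ncm (sout S b))" by (rule card_cartesian_product)
  finally show ?thesis .
qed



lemma ncm_card: "finite S \<Longrightarrow> of_nat (card (ncm S)) = cf (card S)"
proof (induction "card S" arbitrary: S rule: less_induct)
  case less
  show ?case
  proof (cases "S = {}")
    case True
    then show ?thesis by (simp add: ncm_empty cf_def catalan_def)
  next
    case False
    define a where "a = Min S"
    have aS: "a \<in> S" using False less.prems unfolding a_def by simp
    have amin: "\<forall>x\<in>S. a \<le> x" using less.prems unfolding a_def by simp
    define T where "T = S - {a}"
    define P where "P b = {M\<in>ncm S. {a,b}\<in>M}" for b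
    have finT: "finite T" using less.prems unfolding T_def by simp
    have cT: "card T = card S - 1" unfolding T_def using aS less.prems by simp
    have finP: "\<And>b. finite (P b)" unfolding P_def using ncm_finite[OF less.prems] by simp
    have U: "ncm S = (\<Union>b\<in>T. P b)"
    proof
      show "ncm S \<subseteq> (\<Union>b\<in>T. P b)"
      proof
        fix M assume M: "M \<in> ncm S"
        have pmM: "pmatch M" and UM: "\<Union>M = S" using M unfolding ncm_def pm_def by auto
        obtain e where e: "e \<in> M" "a \<in> e" using aS UM by blast
        obtain p r where pr: "p < r" "e = {p,r}" by (rule card2E[OF pmC[OF pmM e(1)]])
        have "\<exists>c. e = {a,c} \<and> c \<noteq> a"
        proof (cases "p = a")
          case True then show ?thesis using pr by auto
        next
          case False then have "r = a" using pr e(2) by auto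
          then show ?thesis using pr by (intro exI[of _ p]) auto
        qed
        then obtain c where c: "e = {a,c}" "c \<noteq> a" by blast
        have "c \<in> S" using UM e(1) c(1) by blast
        then have "c \<in> T" using c(2) unfolding T_def by simp
        moreover have "M \<in> P c" unfolding P_def using M e(1) c(1) by simp
        ultimately show "M \<in> (\<Union>b\<in>T. P b)" by blast
      qed
      show "(\<Union>b\<in>T. P b) \<subseteq> ncm S" unfolding P_def by blast
    qed
    have disj: "\<forall>b\<in>T. \<forall>b'\<in>T. b \<noteq> b' \<longrightarrow> P b \<inter> P b' = {}"
    proof (intro ballI impI)
      fix b b' assume b: "b \<in> T" "b' \<in> T" "b \<noteq> b'"
      show "P b \<inter> P b' = {}"
      proof (rule ccontr)
        assume "P b \<inter> P b' \<noteq> {}"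
        then obtain M where M: "M \<in> ncm S" "{a,b} \<in> M" "{a,b'} \<in> M" unfolding P_def by blast
        have pmM: "pmatch M" using M(1) unfolding ncm_def pm_def by auto
        have "{a,b} \<noteq> {a,b'}" using b unfolding T_def by (auto simp: doubleton_eq_iff)
        then have "{a,b} \<inter> {a,b'} = {}" by (rule pmD[OF pmM M(2) M(3)])
        then show False by simp
      qed
    qed
    have "card (ncm S) = (\<Sum>b\<in>T. card (P b))"
      unfolding U by (rule card_UN_disjoint[OF finT]) (use finP disj in auto)
    then have "(of_nat (card (ncm S)) :: rat) = (\<Sum>b\<in>T. of_nat (card (P b)))" by simp
    also have "\<dots> = (\<Sum>b\<in>T. cf (card (sinn S a b)) * cf (card S - 2 - card (sinn S a b)))"
    proof (rule sum.cong[OF refl])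
      fix b assume bT: "b \<in> T"
      have bS: "b \<in> S" and ne: "a \<noteq> b" using bT unfolding T_def by auto
      have fs: "finite (sinn S a b)" "finite (sout S b)" using less.prems unfolding sinn_def sout_def by auto
      have cS: "card S = 2 + card (sinn S a b) + card (sout S b)" by (rule S_decomp[OF less.prems amin ne aS bS])
      have l1: "card (sinn S a b) < card S" and l2: "card (sout S b) < card S" using cS by auto
      have "of_nat (card (P b)) = (of_nat (card (ncm (sinn S a b)) * card (ncm (sout S b))) :: rat)"
        unfolding P_def using P_card[OF less.prems amin ne aS bS] by simp
      also have "\<dots> = cf (card (sinn S a b)) * cf (card (sout S b))"
        using less.hyps[OF l1 fs(1)] less.hyps[OF l2 fs(2)] by simp
      also have "card (sout S b) = card S - 2 - card (sinn S a b)" using cS by simp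
      finally show "of_nat (card (P b)) = cf (card (sinn S a b)) * cf (card S - 2 - card (sinn S a b))" .
    qed
    also have "\<dots> = (\<Sum>j<card T. cf j * cf (card S - 2 - j))"
    proof (rule sum.reindex_bij_betw)
      let ?h = "\<lambda>b. card (sinn S a b)"
      have mono: "?h b < ?h b'" if "b \<in> T" "b' \<in> T" "b < b'" for b b'
      proof -
        have "a \<le> b" using amin that(1) unfolding T_def by auto
        then have "a < b" using that(1) unfolding T_def by auto
        have "sinn S a b \<subset> sinn S a b'"
        proof
          show "sinn S a b \<subseteq> sinn S a b'" using that(3) unfolding sinn_def by auto
          have "b \<in> sinn S a b'" using that \<open>a < b\<close> unfolding sinn_def T_def by auto
          moreover have "b \<notin> sinn S a b" unfolding sinn_def by auto
          ultimately show "sinn S a b \<noteq> sinn S a b'" by blast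
        qed
        moreover have "finite (sinn S a b')" using less.prems unfolding sinn_def by auto
        ultimately show ?thesis by (rule psubset_card_mono[rotated])
      qed
      have inj: "inj_on ?h T"
      proof (rule inj_onI)
        fix b b' assume h: "b \<in> T" "b' \<in> T" "?h b = ?h b'"
        show "b = b'"
        proof (rule ccontr)
          assume "b \<noteq> b'"
          then have "b < b' \<or> b' < b" by auto
          then show False using mono[OF h(1,2)] mono[OF h(2,1)] h(3) by auto
        qed
      qed
      have sub: "?h ` T \<subseteq> {..<card T}"
      proof
        fix j assume "j \<in> ?h ` T"
        then obtain b where b: "b \<in> T" "j = ?h b" by blast
        have "sinn S a b \<subseteq> T - {b}" unfolding sinn_def T_def by auto
        then have "?h b \<le> card (T - {b})" using finT by (simp add: card_mono)
        also have "\<dots> < card T"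
        proof -
          have "card T > 0" using b(1) finT card_gt_0_iff by blast
          then show ?thesis using b(1) finT by simp
        qed
        finally show "j \<in> {..<card T}" using b(2) by simp
      qed
      have "card (?h ` T) = card {..<card T}" using card_image[OF inj] by simp
      then have "?h ` T = {..<card T}" using sub by (simp add: card_subset_eq)
      then show "bij_betw ?h T {..<card T}" using inj unfolding bij_betw_def by simp
    qed
    also have "\<dots> = cf (Suc (card T))"
    proof -
      have "\<And>j. card S - 2 - j = card T - 1 - j" using cT by simp
      then show ?thesis by (simp add: cf_rec)
    qed
    also have "Suc (card T) = card S" using cT aS less.prems False by (simp add: card_gt_0_iff)
    finally show ?thesis .
  qed
qed



lemma contains_crossing:
  assumes pmM: "pmatch M"
  shows "contains_pattern M m1212 2 \<longleftrightarrow> crossing M"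
proof
  assume "contains_pattern M m1212 2"
  then obtain i where sm: "strict_mono_on {1..4} i" and
    iff: "\<forall>p\<in>{1..4}. \<forall>q\<in>{1..4}. {i p, i q} \<in> M \<longleftrightarrow> {p, q} \<in> m1212"
    unfolding contains_pattern_def by auto
  have "i 1 < i 2" "i 2 < i 3" "i 3 < i 4" using sm unfolding strict_mono_on_def by auto
  moreover have "{i 1, i 3} \<in> M" "{i 2, i 4} \<in> M" using iff unfolding m1212_def by auto
  ultimately show "crossing M" unfolding crossing_def by blast
next
  assume "crossing M"
  then obtain a b c d where o: "a < b" "b < c" "c < d" and e: "{a,c} \<in> M" "{b,d} \<in> M"
    unfolding crossing_def by blast
  define i where "i p = (if p = 1 then a else if p = 2 then b else if p = (3::nat) then c else d)" for p
  have NE: "{x,y} = {a,c} \<or> {x,y} = {b,d}" if xy: "{x,y} \<in> M" "x \<in> {a,b,c,d}" for x y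
  proof (cases "x \<in> {a,c}")
    case True
    then have "{x,y} \<inter> {a,c} \<noteq> {}" by auto
    then show ?thesis using pmD[OF pmM xy(1) e(1)] by blast
  next
    case False
    then have "x \<in> {b,d}" using xy(2) by auto
    then have "{x,y} \<inter> {b,d} \<noteq> {}" by auto
    then show ?thesis using pmD[OF pmM xy(1) e(2)] by blast
  qed
  have R: "{i p, i q} \<in> M \<longleftrightarrow> ({i p, i q} = {a,c} \<or> {i p, i q} = {b,d})" for p q
  proof
    assume "{i p, i q} \<in> M"
    moreover have "i p \<in> {a,b,c,d}" unfolding i_def by auto
    ultimately show "{i p, i q} = {a,c} \<or> {i p, i q} = {b,d}" by (rule NE)
  next
    assume "{i p, i q} = {a,c} \<or> {i p, i q} = {b,d}"
    then show "{i p, i q} \<in> M" using e by auto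
  qed
  have r4: "p \<in> {1..4} \<longleftrightarrow> p = 1 \<or> p = 2 \<or> p = 3 \<or> p = (4::nat)" for p by auto
  have "strict_mono_on {1..4} i"
    unfolding strict_mono_on_def r4 using o by (auto simp: i_def)
  moreover have "i ` {1..4} \<subseteq> \<Union>M"
    using e unfolding r4 i_def by auto
  moreover have "\<forall>p\<in>{1..4}. \<forall>q\<in>{1..4}. {i p, i q} \<in> M \<longleftrightarrow> {p, q} \<in> m1212"
    unfolding R r4 using o by (auto simp: i_def m1212_def doubleton_eq_iff)
  ultimately show "contains_pattern M m1212 2" unfolding contains_pattern_def by auto
qed



lemma is_matching_pm: "is_matching n M \<longleftrightarrow> M \<in> pm {1..2*n}"
  unfolding is_matching_def pm_def pmatch_def by auto

lemma redge:
  assumes M: "M \<in> pm {1..2*n}" and n: "n \<ge> 1"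
  shows "rightmost_edge M \<in> M" "2*n \<in> rightmost_edge M"
proof -
  have pmM: "pmatch M" and U: "\<Union>M = {1..2*n}" using M unfolding pm_def by auto
  have mx: "Max (\<Union>M) = 2*n" unfolding U using n by (intro Max_eqI) auto
  have ex: "\<exists>e. e \<in> M \<and> 2*n \<in> e" using U n by auto
  have un: "e = e'" if "e \<in> M \<and> 2*n \<in> e" "e' \<in> M \<and> 2*n \<in> e'" for e e'
    using pmD[OF pmM] that by blast
  have "\<exists>!e. e \<in> M \<and> 2*n \<in> e" using ex un by blast
  then have "rightmost_edge M \<in> M \<and> 2*n \<in> rightmost_edge M"
    unfolding rightmost_edge_def mx by (rule theI')
  then show "rightmost_edge M \<in> M" "2*n \<in> rightmost_edge M" by auto
qed

lemma redge_eq: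
  assumes M: "M \<in> pm {1..2*n}" and n: "n \<ge> 1" and e: "e \<in> M" "2*n \<in> e"
  shows "rightmost_edge M = e"
proof -
  have pmM: "pmatch M" using M unfolding pm_def by auto
  show ?thesis using redge[OF M n] e pmD[OF pmM] by blast
qed

definition AA :: "nat \<Rightarrow> nat set set set" where
  "AA n = {M \<in> pm {1..2*n}. \<not> crossing (M - {rightmost_edge M})}"

lemma mu_eq:
  assumes n: "n \<ge> 1"
  shows "mu n m1212 2 = AA n - ncm {1..2*n}"
proof -
  have "M \<in> mu n m1212 2 \<longleftrightarrow> M \<in> AA n - ncm {1..2*n}" for M
  proof (cases "M \<in> pm {1..2*n}")
    case True
    then have pmM: "pmatch M" unfolding pm_def by auto
    have pm2: "pmatch (M - {rightmost_edge M})" using pmatch_subset[OF pmM] by blast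
    show ?thesis unfolding mu_def AA_def ncm_def is_matching_pm
      using True contains_crossing[OF pmM] contains_crossing[OF pm2] by auto
  next
    case False then show ?thesis unfolding mu_def AA_def ncm_def is_matching_pm by auto
  qed
  then show ?thesis by blast
qed

lemma ncm_sub_AA: "ncm {1..2*n} \<subseteq> AA n"
  unfolding ncm_def AA_def using crossing_mono by blast

lemma AA_bij:
  assumes n: "n \<ge> 1"
  shows "AA n = (\<lambda>(a,N). insert {a,2*n} N) ` (SIGMA a:{1..<2*n}. ncm ({1..<2*n} - {a}))"
    and "inj_on (\<lambda>(a,N). insert {a,2*n} N) (SIGMA a:{1..<2*n}. ncm ({1..<2*n} - {a}))"
proof -
  let ?h = "\<lambda>(a,N). insert {a,2*n} N"
  let ?I = "SIGMA a:{1..<2*n}. ncm ({1..<2*n} - {a})"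
  have key: "insert {a,2*n} N \<in> pm {1..2*n} \<and> rightmost_edge (insert {a,2*n} N) = {a,2*n}
      \<and> insert {a,2*n} N - {{a,2*n}} = N"
    if a: "a \<in> {1..<2*n}" and N: "N \<in> pm ({1..<2*n} - {a})" for a N
  proof -
    have c2: "card {a,2*n} = 2" using a by auto
    have d: "{a,2*n} \<inter> ({1..<2*n} - {a}) = {}" by auto
    have s: "{a,2*n} \<union> ({1..<2*n} - {a}) = {1..2*n}" using a n by auto
    have P: "insert {a,2*n} N \<in> pm {1..2*n}" using pm_insert[OF N c2 d] unfolding s .
    have UN: "\<Union>N = {1..<2*n} - {a}" using N unfolding pm_def by auto
    have nin: "{a,2*n} \<notin> N" using UN by auto
    show ?thesis using P redge_eq[OF P n, of "{a,2*n}"] nin by auto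
  qed
  show "inj_on ?h ?I"
  proof (rule inj_onI)
    fix x y assume x: "x \<in> ?I" and y: "y \<in> ?I" and hxy: "?h x = ?h y"
    obtain a N where xx: "x = (a,N)" "a \<in> {1..<2*n}" "N \<in> ncm ({1..<2*n} - {a})" using x by blast
    obtain b K where yy: "y = (b,K)" "b \<in> {1..<2*n}" "K \<in> ncm ({1..<2*n} - {b})" using y by blast
    have k1: "rightmost_edge (insert {a,2*n} N) = {a,2*n}" "insert {a,2*n} N - {{a,2*n}} = N"
      using key[OF xx(2)] xx(3) unfolding ncm_def by auto
    have k2: "rightmost_edge (insert {b,2*n} K) = {b,2*n}" "insert {b,2*n} K - {{b,2*n}} = K"
      using key[OF yy(2)] yy(3) unfolding ncm_def by auto
    have G: "insert {a,2*n} N = insert {b,2*n} K" using hxy xx yy by simp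
    have "{a,2*n} = {b,2*n}" using k1(1) k2(1) G by simp
    then have ab: "a = b" using xx(2) yy(2) by (auto simp: doubleton_eq_iff)
    have "N = insert {a,2*n} N - {{a,2*n}}" by (rule k1(2)[symmetric])
    also have "\<dots> = insert {b,2*n} K - {{b,2*n}}" using G ab by simp
    also have "\<dots> = K" by (rule k2(2))
    finally have "N = K" .
    then show "x = y" using xx yy ab by simp
  qed
  show "AA n = ?h ` ?I"
  proof
    show "?h ` ?I \<subseteq> AA n"
    proof
      fix M assume "M \<in> ?h ` ?I"
      then obtain a N where m: "a \<in> {1..<2*n}" "N \<in> ncm ({1..<2*n} - {a})" "M = insert {a,2*n} N" by blast
      have N: "N \<in> pm ({1..<2*n} - {a})" "\<not> crossing N" using m(2) unfolding ncm_def by auto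
      show "M \<in> AA n" using key[OF m(1) N(1)] N(2) m(3) unfolding AA_def by auto
    qed
    show "AA n \<subseteq> ?h ` ?I"
    proof
      fix M assume M: "M \<in> AA n"
      then have P: "M \<in> pm {1..2*n}" and nc: "\<not> crossing (M - {rightmost_edge M})" unfolding AA_def by auto
      have pmM: "pmatch M" and UM: "\<Union>M = {1..2*n}" using P unfolding pm_def by auto
      note r = redge[OF P n]
      define e where "e = rightmost_edge M"
      obtain p q where pq: "p < q" "e = {p,q}" by (rule card2E[OF pmC[OF pmM r(1)[folded e_def]]])
      have "q = 2*n"
      proof -
        have "q \<in> {1..2*n}" using UM r(1) pq unfolding e_def by blast
        moreover have "p = 2*n \<or> q = 2*n" using r(2) pq unfolding e_def by auto
        ultimately show ?thesis using pq(1) by auto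
      qed
      then have e2: "e = {p, 2*n}" using pq by simp
      have pin: "p \<in> {1..<2*n}" using UM r(1) pq \<open>q = 2*n\<close> unfolding e_def by auto
      have "M - {e} \<in> pm ({1..2*n} - e)" by (rule pm_remove[OF P r(1)[folded e_def]])
      moreover have "{1..2*n} - e = {1..<2*n} - {p}" using e2 by auto
      ultimately have "M - {e} \<in> ncm ({1..<2*n} - {p})" using nc unfolding ncm_def e_def by auto
      moreover have "M = insert {p,2*n} (M - {e})" using r(1) e2 unfolding e_def by auto
      ultimately show "M \<in> ?h ` ?I" using pin by (auto intro!: image_eqI[of _ _ "(p, M - {e})"])
    qed
  qed
qed

lemma card_mu:
  assumes n: "n \<ge> 1"
  shows "(of_nat (card (mu n m1212 2)) :: rat) = of_nat (2*n-1) * catalan (n-1) - catalan n"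
proof -
  let ?h = "\<lambda>(a,N). insert {a,2*n} N"
  let ?I = "SIGMA a:{1..<2*n}. ncm ({1..<2*n} - {a})"
  have finI: "\<forall>a\<in>{1..<2*n}. finite (ncm ({1..<2*n} - {a}))" using ncm_finite by auto
  have "card (AA n) = card ?I" unfolding AA_bij(1)[OF n] by (rule card_image[OF AA_bij(2)[OF n]])
  also have "\<dots> = (\<Sum>a\<in>{1..<2*n}. card (ncm ({1..<2*n} - {a})))" using card_SigmaI finI by simp
  finally have cA: "card (AA n) = (\<Sum>a\<in>{1..<2*n}. card (ncm ({1..<2*n} - {a})))" .
  have each: "(of_nat (card (ncm ({1..<2*n} - {a}))) :: rat) = catalan (n-1)" if "a \<in> {1..<2*n}" for a
  proof -
    have "card ({1..<2*n} - {a}) = 2*(n-1)" using that n by auto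
    then show ?thesis using ncm_card[of "{1..<2*n} - {a}"] by (simp add: cf_def)
  qed
  have "(of_nat (card (AA n)) :: rat) = (\<Sum>a\<in>{1..<2*n}. of_nat (card (ncm ({1..<2*n} - {a}))))"
    unfolding cA by simp
  also have "\<dots> = (\<Sum>a\<in>{1..<2*n}. catalan (n-1))" using each by simp
  also have "\<dots> = of_nat (2*n-1) * catalan (n-1)" by simp
  finally have A: "(of_nat (card (AA n)) :: rat) = of_nat (2*n-1) * catalan (n-1)" .
  have fA: "finite (AA n)" unfolding AA_def using pm_finite[of "{1..2*n}"] by auto
  have cN: "(of_nat (card (ncm {1..2*n})) :: rat) = catalan n" using ncm_card[of "{1..2*n}"] by (simp add: cf_def)
  have "card (mu n m1212 2) = card (AA n) - card (ncm {1..2*n})"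
    unfolding mu_eq[OF n] by (rule card_Diff_subset[OF finite_subset[OF ncm_sub_AA fA] ncm_sub_AA])
  moreover have "card (ncm {1..2*n}) \<le> card (AA n)" by (rule card_mono[OF fA ncm_sub_AA])
  ultimately show ?thesis using A cN by (simp add: of_nat_diff)
qed

lemma mu_0: "mu 0 m1212 2 = {}"
proof -
  have "\<not> contains_pattern M m1212 2" if "is_matching 0 M" for M
  proof -
    have U: "\<Union>M = {}" using that unfolding is_matching_def by auto
    show ?thesis by (simp add: contains_pattern_def U)
  qed
  then show ?thesis unfolding mu_def by auto
qed



abbreviation "CC \<equiv> catalan_fps"
abbreviation "MM \<equiv> mu_fps m1212 2"

lemma C_deriv: "(1 - 2*fps_X*CC) * fps_deriv CC = CC^2"
proof -
  have "fps_deriv (fps_X * CC^2) = fps_deriv (CC - 1)" using C_eq by simp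
  then have "CC^2 + fps_X * (2 * CC * fps_deriv CC) = fps_deriv CC"
    by (simp add: power2_eq_square algebra_simps)
  then show ?thesis by (simp add: algebra_simps)
qed

definition PP :: "rat fps" where "PP = 2*fps_X*fps_deriv CC + CC"

lemma PP_eq: "(1 - 2*fps_X*CC) * PP = CC"
proof -
  have "(1 - 2*fps_X*CC) * PP = 2*fps_X*((1 - 2*fps_X*CC) * fps_deriv CC) + CC - 2*(fps_X*CC^2)"
    unfolding PP_def by (simp add: algebra_simps power2_eq_square)
  also have "\<dots> = CC" unfolding C_deriv by (simp add: algebra_simps power2_eq_square)
  finally show ?thesis .
qed

lemma CC_nth: "fps_nth CC k = catalan k" by (simp add: catalan_fps_def)

lemma XD_nth: "fps_nth (fps_X * fps_deriv CC) k = of_nat k * catalan k"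
  by (cases k) (simp_all add: catalan_fps_def)

lemma PP_nth: "fps_nth PP k = of_nat (2*k+1) * catalan k"
proof -
  have eq: "PP = fps_const 2 * (fps_X * fps_deriv CC) + CC" unfolding PP_def by (simp add: numeral_fps_const algebra_simps)
  have "fps_nth PP k = fps_nth (fps_const 2 * (fps_X * fps_deriv CC) + CC) k" using eq by simp
  also have "\<dots> = 2 * (of_nat k * catalan k) + catalan k" by (simp only: fps_add_nth fps_mult_left_const_nth XD_nth CC_nth)
  finally have "fps_nth PP k = 2 * (of_nat k * catalan k) + catalan k" .
  then show ?thesis by (simp add: algebra_simps)
qed

lemma MM_nth: "fps_nth MM n = of_nat (card (mu n m1212 2))"
  by (simp add: mu_fps_def)

lemma MM_eq: "MM = fps_X * PP - (CC - 1)"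
proof (rule fps_ext)
  fix n
  show "fps_nth MM n = fps_nth (fps_X * PP - (CC - 1)) n"
  proof (cases n)
    case 0 then show ?thesis by (simp add: MM_nth mu_0 catalan_fps_def catalan_def)
  next
    case (Suc k)
    have "fps_nth MM n = of_nat (2*Suc k - 1) * catalan k - catalan (Suc k)"
      unfolding MM_nth Suc by (subst card_mu) simp_all
    also have "\<dots> = fps_nth (fps_X * PP - (CC - 1)) n"
      using Suc by (simp add: PP_nth catalan_fps_def)
    finally show ?thesis .
  qed
qed

lemma part_ii: "MM = fps_X * (CC - 1) / ((1 - 2 * fps_X * CC) * (1 - fps_X * CC))"
proof -
  define D where "D = (1 - 2 * fps_X * CC) * (1 - fps_X * CC)"
  have D0: "D \<noteq> 0"
  proof
    assume "D = 0"
    then have "fps_nth D 0 = 0" by simp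
    then show False unfolding D_def by simp
  qed
  have E: "fps_X * CC^2 = CC - 1" by (rule C_eq)
  have "MM * D = fps_X * (CC - 1)"
    unfolding MM_eq D_def using E PP_eq by algebra
  then have "fps_X * (CC - 1) / D = MM * D / D" by simp
  also have "\<dots> = MM" using D0 by simp
  finally show ?thesis unfolding D_def by simp
qed

lemma MM_rec: "MM = fps_X^2 * (PP * CC) + fps_X * (CC * MM)"
  unfolding MM_eq using C_eq PP_eq by algebra

lemma part_i:
  assumes n: "n \<ge> 2"
  shows "of_nat (card (mu n m1212 2)) =
           (\<Sum>k=0..n-2. of_nat (2*k+1) * catalan k * catalan (n-k-2)
                         + catalan k * of_nat (card (mu (n-k-1) m1212 2)))"
proof -
  have "of_nat (card (mu n m1212 2)) = fps_nth MM n" by (simp add: MM_nth)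
  also have "\<dots> = fps_nth (fps_X^2 * (PP * CC)) n + fps_nth (fps_X * (CC * MM)) n"
    by (subst MM_rec) simp
  also have "fps_nth (fps_X^2 * (PP * CC)) n = (\<Sum>k=0..n-2. of_nat (2*k+1) * catalan k * catalan (n-k-2))"
  proof -
    have "fps_nth (fps_X^2 * (PP * CC)) n = fps_nth (PP * CC) (n-2)" using n by (simp only: fps_X_power_mult_nth) simp
    also have "\<dots> = (\<Sum>k=0..n-2. of_nat (2*k+1) * catalan k * catalan (n-2-k))"
      by (simp only: fps_mult_nth PP_nth CC_nth)
    finally show ?thesis by (simp add: diff_commute)
  qed
  also have "fps_nth (fps_X * (CC * MM)) n = (\<Sum>k=0..n-1. catalan k * of_nat (card (mu (n-1-k) m1212 2)))"
  proof -
    have "fps_nth (fps_X * (CC * MM)) n = fps_nth (CC * MM) (n-1)" using n by (simp only: fps_X_mult_nth) simp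
    also have "\<dots> = (\<Sum>k=0..n-1. catalan k * of_nat (card (mu (n-1-k) m1212 2)))"
      by (simp only: fps_mult_nth MM_nth CC_nth)
    finally show ?thesis .
  qed
  also have "\<dots> = (\<Sum>k=0..n-2. catalan k * of_nat (card (mu (n-k-1) m1212 2)))"
  proof -
    have "n - 1 = Suc (n-2)" using n by simp
    then have "(\<Sum>k=0..n-1. catalan k * of_nat (card (mu (n-1-k) m1212 2)))
        = (\<Sum>k=0..n-2. catalan k * of_nat (card (mu (n-1-k) m1212 2))) + catalan (Suc (n-2)) * of_nat (card (mu (n-1-Suc (n-2)) m1212 2))"
      by simp
    also have "n-1-Suc (n-2) = 0" using n by simp
    finally show ?thesis by (simp add: mu_0 diff_commute)
  qed
  finally show ?thesis by (simp add: sum.distrib)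
qed

lemma aux_field0:
  fixes a b c F f :: rat
  assumes a: "a \<noteq> 0" and b: "b \<noteq> 0" and c: "c \<noteq> 0" and F: "F \<noteq> 0" and f: "f \<noteq> 0"
    and hb: "b = a + 1" and hc: "c = a + 2"
  shows "(a+b) * (F / (a^2 * f^2 * b)) - (2*b)*(a+b)*F / (b^2*a^2*f^2*c)
       = (a+b)*F / (f * (c*b*a*f))"
proof -
  have "(a+b) * (F / (a^2 * f^2 * b)) - (2*b)*(a+b)*F / (b^2*a^2*f^2*c)
      = ((a+b)*F / (a^2*f^2*b^2*c)) * (b*c - 2*b)"
    using a b c f by (simp add: field_simps power2_eq_square)
  also have "b*c - 2*b = a*b" unfolding hc by (simp add: algebra_simps)
  also have "((a+b)*F / (a^2*f^2*b^2*c)) * (a*b) = (a+b)*F / (f * (c*b*a*f))"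
    using a b c f by (simp add: field_simps power2_eq_square)
  finally show ?thesis .
qed

lemma aux_field:
  fixes x F f :: rat
  assumes x: "x \<ge> 0" and F: "F \<noteq> 0" and f: "f \<noteq> 0"
  shows "(2*x+3) * (F / ((x+1)^2 * f^2 * (x+2))) - (2*x+4)*(2*x+3)*F / ((x+2)^2*(x+1)^2*f^2*(x+3))
       = (2*x+3)*F / (f * ((x+3)*(x+2)*(x+1)*f))"
proof -
  have nz: "x+1 \<noteq> 0" "x+2 \<noteq> 0" "x+3 \<noteq> 0" using x by linarith+
  have e1: "2*x+3 = (x+1) + (x+2)" and e2: "2*x+4 = 2*(x+2)" by simp_all
  show ?thesis unfolding e1 e2
    by (rule aux_field0[OF nz F f]) simp_all
qed

lemma part_iii:
  assumes n: "n \<ge> 2"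
  shows "card (mu n m1212 2) = (2*n-1) choose (n-2)"
proof -
  obtain m where m: "n = m + 2" using n by (metis add.commute le_Suc_ex)
  define x where "x = (of_nat m :: rat)"
  define F where "F = (fact (2*m+2) :: rat)"
  define f where "f = (fact m :: rat)"
  have fm1: "(fact (m+1) :: rat) = (x+1) * f" unfolding x_def f_def by (simp add: algebra_simps)
  have fm2: "(fact (m+2) :: rat) = (x+2) * ((x+1) * f)" unfolding x_def f_def
    by (simp add: algebra_simps numeral_eq_Suc)
  have fm3: "(fact (m+3) :: rat) = (x+3) * ((x+2) * ((x+1) * f))" unfolding x_def f_def
    by (simp add: algebra_simps numeral_eq_Suc)
  have c1: "catalan (m+1) = F / ((x+1)^2 * f^2 * (x+2))"
  proof -
    have "catalan (m+1) = fact (2*(m+1)) / (fact (m+1) * fact (m+1)) / (of_nat (m+1) + 1)"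
      unfolding catalan_cb cb_fact ..
    also have "2*(m+1) = 2*m+2" by simp
    finally show ?thesis unfolding fm1 F_def x_def by (simp add: power2_eq_square algebra_simps)
  qed
  have c2: "catalan (m+2) = (2*x+4)*(2*x+3)*F / ((x+2)^2*(x+1)^2*f^2*(x+3))"
  proof -
    have "catalan (m+2) = fact (2*(m+2)) / (fact (m+2) * fact (m+2)) / (of_nat (m+2) + 1)"
      unfolding catalan_cb cb_fact ..
    also have "(fact (2*(m+2)) :: rat) = (2*x+4)*((2*x+3)*F)"
    proof -
      have "2*(m+2) = Suc (Suc (2*m+2))" by simp
      then show ?thesis unfolding F_def x_def by (simp add: algebra_simps)
    qed
    finally show ?thesis unfolding fm2 x_def by (simp add: power2_eq_square algebra_simps)
  qed
  have c3: "(of_nat ((2*m+3) choose m) :: rat) = (2*x+3)*F / (f * ((x+3)*(x+2)*(x+1)*f))"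
  proof -
    have "(of_nat ((2*m+3) choose m) :: rat) = fact (2*m+3) / (fact m * fact (2*m+3-m))"
      by (rule binomial_fact) simp
    also have "2*m+3-m = m+3" by simp
    also have "(fact (2*m+3) :: rat) = (2*x+3) * F" unfolding F_def x_def
      by (simp add: algebra_simps numeral_eq_Suc)
    finally show ?thesis unfolding fm3 f_def by (simp add: algebra_simps)
  qed
  have "(of_nat (card (mu n m1212 2)) :: rat) = of_nat (2*n-1) * catalan (n-1) - catalan n"
    by (rule card_mu) (use n in simp)
  also have "\<dots> = (2*x+3) * catalan (m+1) - catalan (m+2)"
    unfolding m x_def by simp
  also have "\<dots> = of_nat ((2*m+3) choose m)"
    unfolding c1 c2 c3 by (rule aux_field) (simp_all add: x_def F_def f_def)
  finally have "(of_nat (card (mu n m1212 2)) :: rat) = of_nat ((2*m+3) choose m)" .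
  moreover have "2*m+3 = 2*n-1" "m = n-2" using m by simp_all
  ultimately show ?thesis by (simp only: of_nat_eq_iff)
qed

theorem proposition3:
  fixes n :: nat
  assumes "n \<ge> 2"
  shows "(of_nat (card (mu n m1212 2)) =
           (\<Sum>k=0..n-2. of_nat (2*k+1) * catalan k * catalan (n-k-2)
                         + catalan k * of_nat (card (mu (n-k-1) m1212 2))))
       \<and> (mu_fps m1212 2 =
           fps_X * (catalan_fps - 1) /
           ((1 - 2 * fps_X * catalan_fps) * (1 - fps_X * catalan_fps)))
       \<and> (card (mu n m1212 2) = (2*n-1) choose (n-2))"
  using part_i[OF assms] part_ii part_iii[OF assms] by blast

end
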